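(* Let $\{A_n\}_{n\geqslant 1}$ and $\{B_n\}_{n\geqslant 1}$ be two mutually independent sequences of i.i.d. random variables, and let $W_1\geqslant 0$ be a random variable independent of $\{(A_n,B_{n+1})\}_{n\geqslant 1}$. Define $X_{n+1}=B_{n+1}-A_n$ for $n\geqslant 1$ (so $X_2,X_3,\dots$ are i.i.d., distributed as a generic random variable $X$), and define recursively $$W_{n+1}=\max\{0,\,X_{n+1}-W_n\},\qquad n\geqslant 1.$$ Assume $\mathbb{P}[X>0]\in(0,1)$, and let $c(k)=\operatorname{cov}[W_1,W_{1+k}]$ for integers $k\geqslant 0$ (whenever these covariances exist). Then $c(k)\geqslant 0$ if $k$ is even and $c(k)\leqslant 0$ if $k$ is odd. If, in addition, $X$ has a strictly positive density on some interval $(a,b)$ with $0<a<b$, and $W_1$ has the limiting (stationary) waiting-time distribution of the recursion, i.e. $W_1\stackrel{D}{=}W$ where $W$ satisfies $W\stackrel{D}{=}\max\{0,X-W\}$ with $X$ independent of $W$, then $c(k)>0$ for every even $k$ and $c(k)<0$ for every odd $k$.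
   Context: This recursion models a single server alternating between two service points: $B_n$ is the preparation time of customer $n$, $A_n$ the service time of customer $n$, and $W_n$ the time the server waits before serving customer $n$. The distribution of $X$ need not be continuous for the first part of the statement. *)

theory Defs
  imports "HOL-Probability.Probability"
begin

text \<open>Waiting times, with an index shift: wait W1 A B k is W_(1+k).
  wait 0 = W_1 and W_(k+2) = max 0 (X_(k+2) - W_(k+1)) where X_(k+2) = B_(k+2) - A_(k+1).\<close>
primrec wait :: "('a \<Rightarrow> real) \<Rightarrow> (nat \<Rightarrow> 'a \<Rightarrow> real) \<Rightarrow> (nat \<Rightarrow> 'a \<Rightarrow> real) \<Rightarrow> nat \<Rightarrow> 'a \<Rightarrow> real" where
  "wait W1 A B 0 = W1"
| "wait W1 A B (Suc k) = (\<lambda>\<omega>. max 0 ((B (k + 2) \<omega> - A (k + 1) \<omega>) - wait W1 A B k \<omega>))"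

definition cov :: "'a measure \<Rightarrow> ('a \<Rightarrow> real) \<Rightarrow> ('a \<Rightarrow> real) \<Rightarrow> real" where
  "cov M U V = integral\<^sup>L M (\<lambda>\<omega>. (U \<omega> - integral\<^sup>L M U) * (V \<omega> - integral\<^sup>L M V))"

definition cov_exists :: "'a measure \<Rightarrow> ('a \<Rightarrow> real) \<Rightarrow> ('a \<Rightarrow> real) \<Rightarrow> bool" where
  "cov_exists M U V \<longleftrightarrow> integrable M U \<and> integrable M V \<and> integrable M (\<lambda>\<omega>. U \<omega> * V \<omega>)"

definition stationary_law :: "real measure \<Rightarrow> real measure \<Rightarrow> bool" where
  "stationary_law mu nu \<longleftrightarrow> prob_space mu \<and> sets mu = sets borel \<and>
     mu = distr (mu \<Otimes>\<^sub>M nu) borel (\<lambda>(w, x). max 0 (x - w))"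

definition pos_density_on :: "'a measure \<Rightarrow> ('a \<Rightarrow> real) \<Rightarrow> real \<Rightarrow> real \<Rightarrow> bool" where
  "pos_density_on M X a b \<longleftrightarrow> (\<exists>f :: real \<Rightarrow> real. f \<in> borel_measurable borel \<and>
     (\<forall>x\<in>{a<..<b}. f x > 0) \<and>
     (\<forall>S \<in> sets borel. S \<subseteq> {a<..<b} \<longrightarrow>
        emeasure M {\<omega> \<in> space M. X \<omega> \<in> S} = (\<integral>\<^sup>+ x\<in>S. ennreal (f x) \<partial>lborel)))"

end

theory Submission
  imports Defs
begin



primrec g :: "real \<Rightarrow> (nat \<Rightarrow> real) \<Rightarrow> nat \<Rightarrow> real" where
  "g w y 0 = w"
| "g w y (Suc k) = max 0 (y k - g w y k)"

lemma g_mono: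
  assumes "w \<le> w'"
  shows "(even k \<longrightarrow> g w y k \<le> g w' y k) \<and> (odd k \<longrightarrow> g w' y k \<le> g w y k)"
  using assms by (induction k) auto

lemma g_lip: "\<bar>g w y k - g w' y k\<bar> \<le> \<bar>w - w'\<bar>"
  by (induction k) (auto simp: abs_if max_def split: if_splits)

lemma g_strict:
  assumes "\<forall>j<k. g w y j < y j" "w \<noteq> w'"
  shows "g w y k \<noteq> g w' y k"
  using assms
proof (induction k)
  case 0 then show ?case by simp
next
  case (Suc k)
  then have ne: "g w y k \<noteq> g w' y k" and lt: "g w y k < y k" by auto
  show ?case using ne lt by (auto simp: max_def)
qed

lemma g_nonneg: "k > 0 \<Longrightarrow> 0 \<le> g w y k"
  by (cases k) auto

lemma g_chain_inv:
  assumes e: "0 \<le> e" and y: "\<forall>j<k. p < y j \<and> y j < p + e"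
    and w1: "real k * e < w" and w2: "w + real k * e < p"
  shows "j \<le> k \<Longrightarrow> (even j \<longrightarrow> \<bar>g w y j - w\<bar> \<le> real j * e) \<and> (odd j \<longrightarrow> \<bar>g w y j - (p - w)\<bar> \<le> real j * e)"
proof (induction j)
  case 0 then show ?case by simp
next
  case (Suc j)
  then have jk: "j < k" by simp
  have ih: "(even j \<longrightarrow> \<bar>g w y j - w\<bar> \<le> real j * e) \<and> (odd j \<longrightarrow> \<bar>g w y j - (p - w)\<bar> \<le> real j * e)"
    using Suc by simp
  have yj: "p < y j" "y j < p + e" using y jk by auto
  have jke: "real j * e \<le> real k * e" using jk e by (simp add: mult_right_mono)
  have lt: "g w y j < y j"
  proof (cases "even j")
    case True
    then have "g w y j - w \<le> real j * e" using ih by (simp add: abs_le_iff)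
    then show ?thesis using yj jke w2 by linarith
  next
    case False
    then have "g w y j - (p - w) \<le> real j * e" using ih by (simp add: abs_le_iff)
    then show ?thesis using yj jke w1 by linarith
  qed
  have eq: "g w y (Suc j) = y j - g w y j" using lt by simp
  show ?case
  proof (cases "even j")
    case True then show ?thesis using ih yj eq by (auto simp: abs_le_iff algebra_simps)
  next
    case False then show ?thesis using ih yj eq by (auto simp: abs_le_iff algebra_simps)
  qed
qed

lemma g_chain:
  assumes e: "0 \<le> e" and y: "\<forall>j<k. p < y j \<and> y j < p + e"
    and w1: "real k * e < w" and w2: "w + real k * e < p"
  shows "\<forall>j<k. g w y j < y j"
proof (intro allI impI)
  fix j assume jk: "j < k"
  have ih: "(even j \<longrightarrow> \<bar>g w y j - w\<bar> \<le> real j * e) \<and> (odd j \<longrightarrow> \<bar>g w y j - (p - w)\<bar> \<le> real j * e)"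
    using g_chain_inv[OF assms] jk by simp
  have yj: "p < y j" "y j < p + e" using y jk by auto
  have jke: "real j * e \<le> real k * e" using jk e by (simp add: mult_right_mono)
  show "g w y j < y j"
  proof (cases "even j")
    case True
    then have "g w y j - w \<le> real j * e" using ih by (simp add: abs_le_iff)
    then show ?thesis using yj jke w2 by linarith
  next
    case False
    then have "g w y j - (p - w) \<le> real j * e" using ih by (simp add: abs_le_iff)
    then show ?thesis using yj jke w1 by linarith
  qed
qed

lemma wait_g: "wait W A B k \<omega> = g (W \<omega>) (\<lambda>n. B (n+2) \<omega> - A (n+1) \<omega>) k"
  by (induction k) (simp_all add: numeral_2_eq_2)


lemma (in prob_space) cov_decomp:
  fixes W V h :: "'a \<Rightarrow> real"
  assumes iW: "integrable M W" and iV: "integrable M V" and iWV: "integrable M (\<lambda>\<omega>. W \<omega> * V \<omega>)"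
    and ih: "integrable M h" and iWh: "integrable M (\<lambda>\<omega>. W \<omega> * h \<omega>)"
    and eq: "(\<integral>\<omega>. W \<omega> * h \<omega> \<partial>M) = expectation W * expectation h"
  shows "cov M W V = (\<integral>\<omega>. (W \<omega> - expectation W) * (V \<omega> - h \<omega>) \<partial>M)"
proof -
  define m where "m = expectation W"
  define c where "c = expectation V"
  have 1: "(\<lambda>\<omega>. (W \<omega> - m) * (V \<omega> - c)) = (\<lambda>\<omega>. (W \<omega> * V \<omega> - m * V \<omega>) - (c * W \<omega> - m * c))"
    by (auto simp: algebra_simps)
  have 2: "(\<lambda>\<omega>. (W \<omega> - m) * (V \<omega> - h \<omega>)) = (\<lambda>\<omega>. (W \<omega> * V \<omega> - W \<omega> * h \<omega>) - (m * V \<omega> - m * h \<omega>))"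
    by (auto simp: algebra_simps)
  have i1: "integrable M (\<lambda>\<omega>. W \<omega> * V \<omega> - m * V \<omega>)" using iWV iV by auto
  have i2: "integrable M (\<lambda>\<omega>. c * W \<omega> - m * c)" using iW by auto
  have i3: "integrable M (\<lambda>\<omega>. W \<omega> * V \<omega> - W \<omega> * h \<omega>)" using iWV iWh by auto
  have i4: "integrable M (\<lambda>\<omega>. m * V \<omega> - m * h \<omega>)" using iV ih by auto
  have e1: "(\<integral>\<omega>. W \<omega> * V \<omega> - m * V \<omega> \<partial>M) = expectation (\<lambda>\<omega>. W \<omega> * V \<omega>) - m * c"
    using Bochner_Integration.integral_diff[OF iWV, where g="\<lambda>\<omega>. m * V \<omega>"] iV by (simp add: c_def)
  have e2: "(\<integral>\<omega>. c * W \<omega> - m * c \<partial>M) = 0"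
    using Bochner_Integration.integral_diff[where M=M and f="\<lambda>\<omega>. c * W \<omega>" and g="\<lambda>_. m * c"] iW by (simp add: m_def prob_space)
  have e3: "(\<integral>\<omega>. W \<omega> * V \<omega> - W \<omega> * h \<omega> \<partial>M) = expectation (\<lambda>\<omega>. W \<omega> * V \<omega>) - m * expectation h"
    using Bochner_Integration.integral_diff[OF iWV iWh] eq by (simp add: m_def)
  have e4: "(\<integral>\<omega>. m * V \<omega> - m * h \<omega> \<partial>M) = m * c - m * expectation h"
    using Bochner_Integration.integral_diff[where M=M and f="\<lambda>\<omega>. m * V \<omega>" and g="\<lambda>\<omega>. m * h \<omega>"] iV ih by (simp add: c_def)
  have L: "cov M W V = expectation (\<lambda>\<omega>. W \<omega> * V \<omega>) - m * c"
    unfolding cov_def m_def[symmetric] c_def[symmetric] 1 Bochner_Integration.integral_diff[OF i1 i2] e1 e2 by simp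
  have R: "(\<integral>\<omega>. (W \<omega> - m) * (V \<omega> - h \<omega>) \<partial>M) = expectation (\<lambda>\<omega>. W \<omega> * V \<omega>) - m * c"
    unfolding 2 Bochner_Integration.integral_diff[OF i3 i4] e3 e4 by simp
  show ?thesis using L R m_def by simp
qed

lemma (in prob_space) integral_pos_event:
  fixes f :: "'a \<Rightarrow> real"
  assumes f: "integrable M f" and nn: "\<And>x. x \<in> space M \<Longrightarrow> 0 \<le> f x"
    and E: "E \<in> sets M" "prob E > 0" and pos: "\<And>x. x \<in> E \<Longrightarrow> 0 < f x"
  shows "integral\<^sup>L M f > 0"
proof -
  have ge: "integral\<^sup>L M f \<ge> 0" by (rule Bochner_Integration.integral_nonneg) (rule nn)
  have "integral\<^sup>L M f \<noteq> 0"
  proof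
    assume "integral\<^sup>L M f = 0"
    moreover have "AE x in M. 0 \<le> f x" by (rule AE_I2) (rule nn)
    ultimately have "AE x in M. f x = 0" using integral_nonneg_eq_0_iff_AE[OF f] by simp
    then have ae: "AE x in M. x \<notin> E"
      by (rule eventually_mono) (metis less_irrefl pos)
    have eqs: "{x\<in>space M. \<not> x \<notin> E} = E" using sets.sets_into_space[OF E(1)] by auto
    have "emeasure M E = 0" using AE_iff_measurable[OF E(1) eqs] ae by simp
    then show False using E(2) by (simp add: measure_def)
  qed
  then show ?thesis using ge by simp
qed


lemma dens_pos:
  assumes pd: "pos_density_on M X a b" and ab: "a \<le> \<alpha>" "\<alpha> < \<beta>" "\<beta> \<le> b"
  shows "emeasure M {\<omega>\<in>space M. X \<omega> \<in> {\<alpha><..<\<beta>}} > 0"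
proof -
  obtain f :: "real \<Rightarrow> real" where fm: "f \<in> borel_measurable borel" and fpos: "\<forall>x\<in>{a<..<b}. f x > 0"
    and fd: "\<forall>S \<in> sets borel. S \<subseteq> {a<..<b} \<longrightarrow>
        emeasure M {\<omega> \<in> space M. X \<omega> \<in> S} = (\<integral>\<^sup>+ x\<in>S. ennreal (f x) \<partial>lborel)"
    using pd unfolding pos_density_on_def by blast
  let ?S = "{\<alpha><..<\<beta>}"
  have sub: "?S \<subseteq> {a<..<b}" using ab by auto
  have eq: "emeasure M {\<omega>\<in>space M. X \<omega> \<in> ?S} = (\<integral>\<^sup>+ x\<in>?S. ennreal (f x) \<partial>lborel)"
    using fd sub by auto
  have "(\<integral>\<^sup>+ x\<in>?S. ennreal (f x) \<partial>lborel) \<noteq> 0"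
  proof
    assume "(\<integral>\<^sup>+ x\<in>?S. ennreal (f x) \<partial>lborel) = 0"
    then have "AE x in lborel. ennreal (f x) * indicator ?S x = 0"
      using nn_integral_0_iff_AE[of "\<lambda>x. ennreal (f x) * indicator ?S x" lborel] fm by simp
    then have ae: "AE x in lborel. x \<notin> ?S"
      by (rule eventually_mono) (use fpos sub in \<open>fastforce simp: indicator_def ennreal_eq_0_iff subset_eq not_le split: if_splits\<close>)
    have eqs: "{x\<in>space lborel. \<not> x \<notin> ?S} = ?S" by auto
    have "emeasure lborel ?S = 0" using AE_iff_measurable[OF _ eqs] ae by simp
    then show False using ab by simp
  qed
  then show ?thesis using eq by (simp add: zero_less_iff_neq_zero)
qed

lemma stat_lb:
  assumes st: "stationary_law \<mu> \<nu>" and pn: "prob_space \<nu>" and sn: "sets \<nu> = sets borel"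
    and S: "S \<in> sets borel" and S1: "S1 \<in> sets borel" and S2: "S2 \<in> sets borel"
    and inc: "\<And>w x. w \<in> S1 \<Longrightarrow> x \<in> S2 \<Longrightarrow> max 0 (x - w) \<in> S"
  shows "emeasure \<mu> S \<ge> emeasure \<mu> S1 * emeasure \<nu> S2"
proof -
  have pm: "prob_space \<mu>" and sm: "sets \<mu> = sets borel"
    and eq: "\<mu> = distr (\<mu> \<Otimes>\<^sub>M \<nu>) borel (\<lambda>(w, x). max 0 (x - w))"
    using st unfolding stationary_law_def by auto
  interpret sf: sigma_finite_measure \<nu> using pn by (rule prob_space_imp_sigma_finite)
  have sp: "sets (\<mu> \<Otimes>\<^sub>M \<nu>) = sets (borel \<Otimes>\<^sub>M borel)" by (rule sets_pair_measure_cong[OF sm sn])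
  have "(\<lambda>(w, x). max 0 (x - w)) \<in> borel_measurable (borel \<Otimes>\<^sub>M (borel :: real measure))"
    by measurable
  then have Phi: "(\<lambda>(w, x). max 0 (x - w)) \<in> borel_measurable (\<mu> \<Otimes>\<^sub>M \<nu>)"
    using measurable_cong_sets[OF sp refl] by blast
  have spm: "space \<mu> = UNIV" using sets_eq_imp_space_eq[OF sm] by simp
  have spn: "space \<nu> = UNIV" using sets_eq_imp_space_eq[OF sn] by simp
  have "emeasure \<mu> S = emeasure (distr (\<mu> \<Otimes>\<^sub>M \<nu>) borel (\<lambda>(w, x). max 0 (x - w))) S"
    using arg_cong[OF eq, of "\<lambda>N. emeasure N S"] .
  also have "\<dots> = emeasure (\<mu> \<Otimes>\<^sub>M \<nu>) ((\<lambda>(w, x). max 0 (x - w)) -` S \<inter> space (\<mu> \<Otimes>\<^sub>M \<nu>))"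
    by (rule emeasure_distr[OF Phi S])
  also have "\<dots> \<ge> emeasure (\<mu> \<Otimes>\<^sub>M \<nu>) (S1 \<times> S2)"
  proof (rule emeasure_mono)
    show "S1 \<times> S2 \<subseteq> (\<lambda>(w, x). max 0 (x - w)) -` S \<inter> space (\<mu> \<Otimes>\<^sub>M \<nu>)"
      using inc by (auto simp: space_pair_measure spm spn)
    show "(\<lambda>(w, x). max 0 (x - w)) -` S \<inter> space (\<mu> \<Otimes>\<^sub>M \<nu>) \<in> sets (\<mu> \<Otimes>\<^sub>M \<nu>)"
      using Phi S by (rule measurable_sets)
  qed
  moreover have "emeasure (\<mu> \<Otimes>\<^sub>M \<nu>) (S1 \<times> S2) = emeasure \<mu> S1 * emeasure \<nu> S2"
    using sf.emeasure_pair_measure_Times[of S1 \<mu> S2] S1 S2 sm sn by simp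
  ultimately show ?thesis by simp
qed

lemma (in prob_space) indep_var_of_vars:
  assumes ind: "indep_vars M' X I" and ij: "i \<in> I" "j \<in> I" "i \<noteq> j"
  shows "indep_var (M' i) (X i) (M' j) (X j)"
proof -
  have rv: "random_variable (M' i) (X i)" "random_variable (M' j) (X j)"
    using ind ij unfolding indep_vars_def by auto
  have isv: "indep_sets (\<lambda>i. sigma_sets (space M) {X i -` A \<inter> space M | A. A \<in> sets (M' i)}) I"
    using ind unfolding indep_vars_def by auto
  have ev: "sigma_sets (space M) {X l -` A \<inter> space M | A. A \<in> sets (M' l)} \<subseteq> events" if "l \<in> I" for l
    using isv that unfolding indep_sets_def by auto
  show ?thesis unfolding indep_var_eq indep_sets2_eq
  proof (intro conjI rv ballI ev ij)
    fix a b
    assume a: "a \<in> sigma_sets (space M) {X i -` A \<inter> space M | A. A \<in> sets (M' i)}"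
      and b: "b \<in> sigma_sets (space M) {X j -` A \<inter> space M | A. A \<in> sets (M' j)}"
    have "prob (\<Inter>l\<in>{i,j}. (\<lambda>l. if l = i then a else b) l) = (\<Prod>l\<in>{i,j}. prob ((\<lambda>l. if l = i then a else b) l))"
      by (rule indep_setsD[OF isv]) (use ij a b in auto)
    then show "prob (a \<inter> b) = prob a * prob b" using ij by (simp add: Int_commute)
  qed
qed



lemma (in prob_space) pair_events_indep:
  fixes Z :: "'i \<Rightarrow> 'a \<Rightarrow> real" and L R :: "nat \<Rightarrow> 'i"
  assumes ind: "indep_vars (\<lambda>_. borel) Z I"
    and L: "\<And>j. L j \<in> I" and R: "\<And>j. R j \<in> I"
    and disj: "disjoint_family_on (\<lambda>j. {L j, R j}) UNIV"
    and T: "T \<in> sets borel" and k: "k > 0"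
  shows "prob (\<Inter>j\<in>{..<k}. {\<omega>\<in>space M. Z (R j) \<omega> - Z (L j) \<omega> \<in> T})
      = (\<Prod>j\<in>{..<k}. prob {\<omega>\<in>space M. Z (R j) \<omega> - Z (L j) \<omega> \<in> T})"
proof -
  let ?E = "\<lambda>i. {Z i -` A \<inter> space M | A. A \<in> sets borel}"
  have isv: "indep_sets ?E I" using ind unfolding indep_vars_def2 by auto
  have isv2: "indep_sets ?E (\<Union>j\<in>UNIV. {L j, R j})"
    by (rule indep_sets_mono_index[OF _ isv]) (use L R in auto)
  have ist: "Int_stable (?E i)" for i
    unfolding Int_stable_def
  proof safe
    fix A B :: "real set" assume A: "A \<in> sets borel" and B: "B \<in> sets borel"
    have "Z i -` A \<inter> space M \<inter> (Z i -` B \<inter> space M) = Z i -` (A \<inter> B) \<inter> space M" by auto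
    moreover have "A \<inter> B \<in> sets borel" using A B by auto
    ultimately show "\<exists>C. Z i -` A \<inter> space M \<inter> (Z i -` B \<inter> space M) = Z i -` C \<inter> space M \<and> C \<in> sets borel"
      by blast
  qed
  have col: "indep_sets (\<lambda>j. sigma_sets (space M) (\<Union>i\<in>{L j, R j}. ?E i)) UNIV"
    by (rule indep_sets_collect_sigma[OF isv2 ist disj])
  have memb: "{\<omega>\<in>space M. Z (R j) \<omega> - Z (L j) \<omega> \<in> T} \<in> sigma_sets (space M) (\<Union>i\<in>{L j, R j}. ?E i)" for j
  proof -
    let ?G = "\<Union>i\<in>{L j, R j}. ?E i"
    define Nj where "Nj = sigma (space M) ?G"
    have GP: "?G \<subseteq> Pow (space M)" by auto
    have sN: "sets Nj = sigma_sets (space M) ?G" unfolding Nj_def by (rule sets_measure_of[OF GP])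
    have spN: "space Nj = space M" unfolding Nj_def by (rule space_measure_of[OF GP])
    have mi: "Z i \<in> borel_measurable Nj" if "i \<in> {L j, R j}" for i
    proof (rule measurableI)
      fix A :: "real set" assume "A \<in> sets borel"
      then have "Z i -` A \<inter> space M \<in> ?G" using that by blast
      then show "Z i -` A \<inter> space Nj \<in> sets Nj" unfolding sN spN by (rule sigma_sets.Basic)
    qed simp
    have "(\<lambda>\<omega>. Z (R j) \<omega> - Z (L j) \<omega>) \<in> borel_measurable Nj"
      using mi[of "R j"] mi[of "L j"] by (intro borel_measurable_diff) auto
    from measurable_sets[OF this T]
    have "(\<lambda>\<omega>. Z (R j) \<omega> - Z (L j) \<omega>) -` T \<inter> space Nj \<in> sets Nj" .
    moreover have "(\<lambda>\<omega>. Z (R j) \<omega> - Z (L j) \<omega>) -` T \<inter> space Nj = {\<omega>\<in>space M. Z (R j) \<omega> - Z (L j) \<omega> \<in> T}"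
      using spN by auto
    ultimately show ?thesis using sN by simp
  qed
  show ?thesis
    by (rule indep_setsD[OF col]) (use k memb in auto)
qed


theorem theorem2p1:
  fixes M :: "'a measure"
    and A B :: "nat \<Rightarrow> 'a \<Rightarrow> real"
    and W1 :: "'a \<Rightarrow> real"
  assumes P: "prob_space M"
    and indep_AB: "prob_space.indep_vars M (\<lambda>_. borel)
          (\<lambda>i. case i of Inl n \<Rightarrow> A n | Inr n \<Rightarrow> B n)
          ({Inl n | n. n \<ge> 1} \<union> {Inr n | n. n \<ge> 1})"
    and ident_A: "\<And>n. n \<ge> 1 \<Longrightarrow> distr M borel (A n) = distr M borel (A 1)"
    and ident_B: "\<And>n. n \<ge> 1 \<Longrightarrow> distr M borel (B n) = distr M borel (B 1)"
    and W1_nonneg: "\<And>\<omega>. \<omega> \<in> space M \<Longrightarrow> W1 \<omega> \<ge> 0"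
    and W1_meas: "W1 \<in> borel_measurable M"
    and indep_W1: "prob_space.indep_set M
          (sets (vimage_algebra (space M) W1 borel))
          (sets (vimage_algebra (space M) (\<lambda>\<omega> n. (A (n + 1) \<omega>, B (n + 2) \<omega>))
                  (PiM UNIV (\<lambda>_. borel \<Otimes>\<^sub>M borel))))"
    and PX: "prob_space.prob M {\<omega> \<in> space M. B 2 \<omega> - A 1 \<omega> > 0} \<in> {0<..<1}"
  shows "(\<forall>k. cov_exists M W1 (wait W1 A B k) \<longrightarrow>
            (even k \<longrightarrow> cov M W1 (wait W1 A B k) \<ge> 0) \<and>
            (odd k \<longrightarrow> cov M W1 (wait W1 A B k) \<le> 0))
       \<and> ((\<exists>a b. 0 < a \<and> a < b \<and> pos_density_on M (\<lambda>\<omega>. B 2 \<omega> - A 1 \<omega>) a b)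
           \<and> stationary_law (distr M borel W1) (distr M borel (\<lambda>\<omega>. B 2 \<omega> - A 1 \<omega>))
          \<longrightarrow> (\<forall>k. cov_exists M W1 (wait W1 A B k) \<longrightarrow>
            (even k \<longrightarrow> cov M W1 (wait W1 A B k) > 0) \<and>
            (odd k \<longrightarrow> cov M W1 (wait W1 A B k) < 0)))"
proof -
  interpret prob_space M by (rule P)
  let ?I = "{Inl n | n. n \<ge> (1::nat)} \<union> {Inr n | n. n \<ge> (1::nat)}"
  let ?Z = "\<lambda>i. case i of Inl n \<Rightarrow> A n | Inr n \<Rightarrow> B n"
  have rvZ: "\<And>i. i \<in> ?I \<Longrightarrow> ?Z i \<in> borel_measurable M"
    using indep_AB unfolding indep_vars_def by auto
  have rvA[measurable]: "\<And>n. A (Suc n) \<in> borel_measurable M"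
    using rvZ[of "Inl (Suc _)"] by auto
  have rvB[measurable]: "\<And>n. B (Suc n) \<in> borel_measurable M"
    using rvZ[of "Inr (Suc _)"] by auto
  define F where "F = (\<lambda>\<omega> (n::nat). (A (n+1) \<omega>, B (n+2) \<omega>))"
  define N where "N = (PiM UNIV (\<lambda>_::nat. (borel \<Otimes>\<^sub>M borel :: (real \<times> real) measure)))"
  define \<phi> where "\<phi> = (\<lambda>m k (v::nat \<Rightarrow> real \<times> real). g m (\<lambda>n. snd (v n) - fst (v n)) k)"
  have spN: "space N = UNIV" by (simp add: N_def space_PiM space_pair_measure)
  have \<phi>_meas: "\<phi> m k \<in> borel_measurable N" for m k
  proof (induction k)
    case 0 then show ?case by (simp add: \<phi>_def)
  next
    case (Suc k)
    have c: "(\<lambda>v. v k) \<in> measurable N (borel \<Otimes>\<^sub>M borel)"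
      unfolding N_def by (rule measurable_component_singleton) simp
    have "(\<lambda>v. fst (v k)) \<in> borel_measurable N" "(\<lambda>v. snd (v k)) \<in> borel_measurable N"
      using measurable_compose[OF c measurable_fst] measurable_compose[OF c measurable_snd] by auto
    then show ?case using Suc unfolding \<phi>_def by simp
  qed
  have wmeas: "wait W A B k \<in> borel_measurable M" if "W \<in> borel_measurable M" for W k
    using that by (induction k) (simp_all add: numeral_2_eq_2)
  have h_eq: "wait (\<lambda>_. m) A B k \<omega> = \<phi> m k (F \<omega>)" for m k \<omega>
    by (simp add: wait_g \<phi>_def F_def)
  have W1_in: "W1 -` S \<inter> space M \<in> sets (vimage_algebra (space M) W1 borel)" if "S \<in> sets borel" for S :: "real set"
    using in_vimage_algebra[OF that] .
  have F_in: "F -` T \<inter> space M \<in> sets (vimage_algebra (space M) F N)" if "T \<in> sets N" for T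
    using in_vimage_algebra[OF that] .
  have indep_h: "indep_var borel W1 borel (wait (\<lambda>_. m) A B k)" for m k
  proof -
    have s1: "sigma_sets (space M) {W1 -` S \<inter> space M | S. S \<in> sets borel} \<subseteq> sets (vimage_algebra (space M) W1 borel)"
      by (simp add: sets_vimage_algebra)
    have s2: "sigma_sets (space M) {wait (\<lambda>_. m) A B k -` S \<inter> space M | S. S \<in> sets borel} \<subseteq> sets (vimage_algebra (space M) F N)"
    proof (rule sets.sigma_sets_subset'[of _ "vimage_algebra (space M) F N" ])
      show "{wait (\<lambda>_. m) A B k -` S \<inter> space M | S. S \<in> sets borel} \<subseteq> sets (vimage_algebra (space M) F N)"
      proof safe
        fix S :: "real set" assume S: "S \<in> sets borel"
        have "wait (\<lambda>_. m) A B k -` S \<inter> space M = F -` (\<phi> m k -` S \<inter> space N) \<inter> space M"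
          by (auto simp: h_eq spN)
        also have "\<dots> \<in> sets (vimage_algebra (space M) F N)"
          by (rule F_in) (use \<phi>_meas S in \<open>rule measurable_sets\<close>)
        finally show "wait (\<lambda>_. m) A B k -` S \<inter> space M \<in> sets (vimage_algebra (space M) F N)" .
      qed
    qed (metis sets.top space_vimage_algebra)
    have ii: "indep_set (sets (vimage_algebra (space M) W1 borel)) (sets (vimage_algebra (space M) F N))"
      using indep_W1 unfolding F_def N_def .
    have "indep_set (sigma_sets (space M) {W1 -` S \<inter> space M | S. S \<in> sets borel})
       (sigma_sets (space M) {wait (\<lambda>_. m) A B k -` S \<inter> space M | S. S \<in> sets borel})"
      using ii s1 s2 unfolding indep_sets2_eq by (meson subset_trans subsetD)
    then show ?thesis unfolding indep_var_eq
      using W1_meas wmeas[of "\<lambda>_. m"] by simp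
  qed
  define m where "m = expectation W1"
  define D where "D = (\<lambda>k \<omega>. (W1 \<omega> - m) * (wait W1 A B k \<omega> - wait (\<lambda>_. m) A B k \<omega>))"
  have key: "cov M W1 (wait W1 A B k) = integral\<^sup>L M (D k) \<and> integrable M (D k)"
    if ce: "cov_exists M W1 (wait W1 A B k)" for k
  proof -
    let ?V = "wait W1 A B k" and ?h = "wait (\<lambda>_. m) A B k"
    have iW: "integrable M W1" and iV: "integrable M ?V" and iWV: "integrable M (\<lambda>\<omega>. W1 \<omega> * ?V \<omega>)"
      using ce unfolding cov_exists_def by auto
    have ib: "integrable M (\<lambda>\<omega>. \<bar>?V \<omega>\<bar> + \<bar>W1 \<omega> - m\<bar>)"
      using iV iW by (intro Bochner_Integration.integrable_add integrable_abs Bochner_Integration.integrable_diff) auto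
    have bnd: "norm (?h \<omega>) \<le> norm (\<bar>?V \<omega>\<bar> + \<bar>W1 \<omega> - m\<bar>)" for \<omega>
      using g_lip[of m "\<lambda>n. B (n+2) \<omega> - A (n+1) \<omega>" k "W1 \<omega>"] by (simp add: wait_g)
    have ih: "integrable M ?h"
      by (rule Bochner_Integration.integrable_bound[OF ib wmeas[OF borel_measurable_const]]) (intro AE_I2 bnd)
    have iWh: "integrable M (\<lambda>\<omega>. W1 \<omega> * ?h \<omega>)"
      by (rule indep_var_integrable[OF indep_h iW ih])
    have eq: "(\<integral>\<omega>. W1 \<omega> * ?h \<omega> \<partial>M) = expectation W1 * expectation ?h"
      by (rule indep_var_lebesgue_integral[OF indep_h iW ih])
    have c: "cov M W1 ?V = integral\<^sup>L M (D k)"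
      unfolding D_def m_def by (rule cov_decomp[OF iW iV iWV ih[unfolded m_def] iWh[unfolded m_def] eq[unfolded m_def]])
    have "integrable M (\<lambda>\<omega>. (W1 \<omega> * ?V \<omega> - W1 \<omega> * ?h \<omega>) - (m * ?V \<omega> - m * ?h \<omega>))"
      using iWV iWh iV ih by auto
    moreover have "(\<lambda>\<omega>. (W1 \<omega> * ?V \<omega> - W1 \<omega> * ?h \<omega>) - (m * ?V \<omega> - m * ?h \<omega>)) = D k"
      unfolding D_def by (auto simp: algebra_simps)
    ultimately show ?thesis using c by simp
  qed
  have Dsign: "(even k \<longrightarrow> 0 \<le> D k \<omega>) \<and> (odd k \<longrightarrow> D k \<omega> \<le> 0)" for k \<omega>
  proof -
    let ?y = "\<lambda>n. B (n+2) \<omega> - A (n+1) \<omega>"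
    show ?thesis
    proof (cases "W1 \<omega> \<le> m")
      case True
      from g_mono[OF True, of k ?y] show ?thesis using True
        by (auto simp: D_def wait_g intro: mult_nonpos_nonpos mult_nonpos_nonneg)
    next
      case False
      then have le: "m \<le> W1 \<omega>" by simp
      from g_mono[OF le, of k ?y] show ?thesis using False
        by (auto simp: D_def wait_g intro: mult_nonneg_nonpos)
    qed
  qed
  have part1: "(\<forall>k. cov_exists M W1 (wait W1 A B k) \<longrightarrow>
            (even k \<longrightarrow> cov M W1 (wait W1 A B k) \<ge> 0) \<and>
            (odd k \<longrightarrow> cov M W1 (wait W1 A B k) \<le> 0))"
  proof (intro allI impI conjI)
    fix k assume ce: "cov_exists M W1 (wait W1 A B k)"
    { assume "even k" then show "cov M W1 (wait W1 A B k) \<ge> 0"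
        using key[OF ce] Dsign by (simp add: Bochner_Integration.integral_nonneg) }
    { assume o: "odd k"
      have "integral\<^sup>L M (\<lambda>\<omega>. - D k \<omega>) \<ge> 0"
        by (rule Bochner_Integration.integral_nonneg) (use o Dsign in auto)
      then show "cov M W1 (wait W1 A B k) \<le> 0"
        using key[OF ce] by simp }
  qed
  show ?thesis
  proof (rule conjI[OF part1], intro impI allI)
    fix k
    assume H: "(\<exists>a b. 0 < a \<and> a < b \<and> pos_density_on M (\<lambda>\<omega>. B 2 \<omega> - A 1 \<omega>) a b)
           \<and> stationary_law (distr M borel W1) (distr M borel (\<lambda>\<omega>. B 2 \<omega> - A 1 \<omega>))"
      and ce: "cov_exists M W1 (wait W1 A B k)"
    obtain a b where ab: "0 < a" "a < b" and pd: "pos_density_on M (\<lambda>\<omega>. B 2 \<omega> - A 1 \<omega>) a b"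
      using H by blast
    have st: "stationary_law (distr M borel W1) (distr M borel (\<lambda>\<omega>. B 2 \<omega> - A 1 \<omega>))" using H by blast
    have B2m: "B 2 \<in> borel_measurable M" using rvB[of 1] by (metis Suc_1)
    have A1m: "A 1 \<in> borel_measurable M" using rvA[of 0] by (metis One_nat_def)
    have X2m: "(\<lambda>\<omega>. B 2 \<omega> - A 1 \<omega>) \<in> borel_measurable M" using A1m B2m by (intro borel_measurable_diff)
    have pn: "prob_space (distr M borel (\<lambda>\<omega>. B 2 \<omega> - A 1 \<omega>))" by (rule prob_space_distr[OF X2m])
    have sn: "sets (distr M borel (\<lambda>\<omega>. B 2 \<omega> - A 1 \<omega>)) = sets borel" by simp
    have nu_eq: "emeasure (distr M borel (\<lambda>\<omega>. B 2 \<omega> - A 1 \<omega>)) S = emeasure M {\<omega>\<in>space M. B 2 \<omega> - A 1 \<omega> \<in> S}"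
      if "S \<in> sets borel" for S
      using emeasure_distr[OF X2m that] by (simp add: vimage_def Int_def conj_commute)
    have mu_eq: "emeasure (distr M borel W1) S = emeasure M {\<omega>\<in>space M. W1 \<omega> \<in> S}"
      if "S \<in> sets borel" for S
      using emeasure_distr[OF W1_meas that] by (simp add: vimage_def Int_def conj_commute)
    have nu0: "emeasure (distr M borel (\<lambda>\<omega>. B 2 \<omega> - A 1 \<omega>)) {..0} > 0"
    proof -
      have ev: "{\<omega> \<in> space M. B 2 \<omega> - A 1 \<omega> > 0} \<in> events" using X2m by measurable
      have eqs: "{\<omega>\<in>space M. B 2 \<omega> - A 1 \<omega> \<in> {..0}} = space M - {\<omega> \<in> space M. B 2 \<omega> - A 1 \<omega> > 0}" by auto
      have "prob {\<omega>\<in>space M. B 2 \<omega> - A 1 \<omega> \<in> {..0}} > 0"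
        unfolding eqs prob_compl[OF ev] using PX by simp
      then show ?thesis using nu_eq[of "{..0}"] by (simp add: emeasure_eq_measure)
    qed
    have mu_nn: "emeasure (distr M borel W1) {0..} = 1"
    proof -
      have "{\<omega>\<in>space M. W1 \<omega> \<in> {0..}} = space M" using W1_nonneg by auto
      then show ?thesis using mu_eq[of "{0..}"] by (simp add: emeasure_space_1)
    qed
    have mu0: "emeasure (distr M borel W1) {0} > 0"
    proof -
      have "emeasure (distr M borel W1) {0} \<ge> emeasure (distr M borel W1) {0..} * emeasure (distr M borel (\<lambda>\<omega>. B 2 \<omega> - A 1 \<omega>)) {..0}"
        by (rule stat_lb[OF st pn sn]) auto
      then show ?thesis using mu_nn nu0 by (metis mult_1 order_less_le_trans)
    qed
    have mu_int: "prob {\<omega>\<in>space M. W1 \<omega> \<in> {\<alpha><..<\<beta>}} > 0" if ab': "a \<le> \<alpha>" "\<alpha> < \<beta>" "\<beta> \<le> b" for \<alpha> \<beta>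
    proof -
      have le: "emeasure (distr M borel W1) {\<alpha><..<\<beta>} \<ge> emeasure (distr M borel W1) {0} * emeasure (distr M borel (\<lambda>\<omega>. B 2 \<omega> - A 1 \<omega>)) {\<alpha><..<\<beta>}"
        by (rule stat_lb[OF st pn sn]) (use ab ab' in auto)
      have "emeasure (distr M borel (\<lambda>\<omega>. B 2 \<omega> - A 1 \<omega>)) {\<alpha><..<\<beta>} > 0"
        using nu_eq[of "{\<alpha><..<\<beta>}"] dens_pos[OF pd ab'] by simp
      then have "emeasure (distr M borel W1) {\<alpha><..<\<beta>} > 0"
        using le mu0 by (metis ennreal_zero_less_mult_iff order_less_le_trans)
      then show ?thesis using mu_eq[of "{\<alpha><..<\<beta>}"] by (simp add: emeasure_eq_measure)
    qed
    define d where "d = (b - a) / 4"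
    have d0: "d > 0" using ab by (simp add: d_def)
    have d4: "4 * d = b - a" by (simp add: d_def)
    obtain \<alpha> where \<alpha>: "\<alpha> = a \<or> \<alpha> = a + d" and m\<alpha>: "m \<notin> {\<alpha><..<\<alpha>+d}"
    proof (cases "m \<in> {a<..<a+d}")
      case True then show ?thesis using that[of "a + d"] by auto
    next
      case False then show ?thesis using that[of a] by auto
    qed
    define p where "p = a + 3 * d"
    define c where "c = min d a"
    have cd: "c \<le> d" "c \<le> a" unfolding c_def by auto
    define e where "e = c / (2 * (real k + 1))"
    have md0: "c > 0" using d0 ab unfolding c_def by simp
    have den: "2 * (real k + 1) > 0" by simp
    have e0: "e > 0" unfolding e_def using md0 den by simp
    have ke0: "real k * e < c"
    proof -
      have h0: "0 \<le> real k * c" using md0 by simp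
      have h1: "c * (2 * (real k + 1)) = 2 * (real k * c) + 2 * c" by (simp add: algebra_simps)
      have "real k * c < c * (2 * (real k + 1))" using h0 h1 md0 by linarith
      then have "real k * c / (2 * (real k + 1)) < c" using den by (simp add: pos_divide_less_eq)
      then show ?thesis unfolding e_def by simp
    qed
    have ke: "real k * e < d" "real k * e < a" using ke0 cd by auto
    have ec: "e \<le> c"
    proof -
      have h0: "0 \<le> real k * c" using md0 by simp
      have h1: "c * (2 * (real k + 1)) = 2 * (real k * c) + 2 * c" by (simp add: algebra_simps)
      have "c \<le> c * (2 * (real k + 1))" using h0 h1 md0 by linarith
      then show ?thesis unfolding e_def using den by (simp add: pos_divide_le_eq)
    qed
    have Ajm[measurable]: "A (j+1) \<in> borel_measurable M" for j using rvA[of j] by simp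
    have Bjm[measurable]: "B (j+2) \<in> borel_measurable M" for j using rvB[of "Suc j"] by (simp add: numeral_2_eq_2)
    define E1 where "E1 = {\<omega>\<in>space M. W1 \<omega> \<in> {\<alpha><..<\<alpha>+d}}"
    define E2 where "E2 = {\<omega>\<in>space M. \<forall>j<k. p < B (j+2) \<omega> - A (j+1) \<omega> \<and> B (j+2) \<omega> - A (j+1) \<omega> < p + e}"
    have pE1: "prob E1 > 0" unfolding E1_def
      by (rule mu_int) (use \<alpha> d0 d4 ab in auto)
    have pE2: "prob E2 > 0"
    proof (cases "k = 0")
      case True
      then have "E2 = space M" unfolding E2_def by auto
      then show ?thesis by (simp add: prob_space)
    next
      case False
      let ?T = "{p<..<p+e}"
      define Ej where "Ej = (\<lambda>j. {\<omega>\<in>space M. ?Z (Inr (j+2)) \<omega> - ?Z (Inl (j+1)) \<omega> \<in> ?T})"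
      have prodeq: "prob (\<Inter>j\<in>{..<k}. Ej j) = (\<Prod>j\<in>{..<k}. prob (Ej j))"
        unfolding Ej_def
        by (rule pair_events_indep[OF indep_AB]) (use False in \<open>auto simp: disjoint_family_on_def\<close>)
      have E2eq: "E2 = (\<Inter>j\<in>{..<k}. Ej j)" unfolding E2_def Ej_def using False by auto
      have iv: "indep_var borel (A (j+1)) borel (B (j+2))" for j
        using indep_var_of_vars[OF indep_AB, of "Inl (j+1)" "Inr (j+2)"] by auto
      have pl: "distr M (borel \<Otimes>\<^sub>M borel) (\<lambda>\<omega>. (A (j+1) \<omega>, B (j+2) \<omega>)) = distr M borel (A 1) \<Otimes>\<^sub>M distr M borel (B 1)" for j
      proof -
        have "distr M borel (A (j+1)) \<Otimes>\<^sub>M distr M borel (B (j+2)) = distr M (borel \<Otimes>\<^sub>M borel) (\<lambda>\<omega>. (A (j+1) \<omega>, B (j+2) \<omega>))"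
          using iv[of j] unfolding indep_var_distribution_eq by auto
        moreover have "distr M borel (A (j+1)) = distr M borel (A 1)" by (rule ident_A) simp
        moreover have "distr M borel (B (j+2)) = distr M borel (B 1)" by (rule ident_B) simp
        ultimately show ?thesis by simp
      qed
      have xl: "distr M borel (\<lambda>\<omega>. B (j+2) \<omega> - A (j+1) \<omega>) = distr (distr M borel (A 1) \<Otimes>\<^sub>M distr M borel (B 1)) borel (\<lambda>(x,y). y - x)" for j
      proof -
        have m1: "(\<lambda>(x::real,y::real). y - x) \<in> borel_measurable (borel \<Otimes>\<^sub>M borel)" by measurable
        have m2: "(\<lambda>\<omega>. (A (j+1) \<omega>, B (j+2) \<omega>)) \<in> measurable M (borel \<Otimes>\<^sub>M borel)" by measurable
        show ?thesis using distr_distr[OF m1 m2] pl[of j] by (simp add: comp_def)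
      qed
      have pj: "prob (Ej j) = prob {\<omega>\<in>space M. B 2 \<omega> - A 1 \<omega> \<in> ?T}" for j
      proof -
        have mX: "(\<lambda>\<omega>. B (j+2) \<omega> - A (j+1) \<omega>) \<in> borel_measurable M" by measurable
        have "prob (Ej j) = measure (distr M borel (\<lambda>\<omega>. B (j+2) \<omega> - A (j+1) \<omega>)) ?T"
          unfolding Ej_def using measure_distr[OF mX, of ?T] by (simp add: vimage_def Int_def conj_commute)
        also have "\<dots> = measure (distr M borel (\<lambda>\<omega>. B 2 \<omega> - A 1 \<omega>)) ?T"
          by (simp only: xl[of j] xl[of 0, unfolded add_0])
        also have "\<dots> = prob {\<omega>\<in>space M. B 2 \<omega> - A 1 \<omega> \<in> ?T}"
          using measure_distr[OF X2m, of ?T] by (simp add: vimage_def Int_def conj_commute)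
        finally show ?thesis .
      qed
      have p0: "prob {\<omega>\<in>space M. B 2 \<omega> - A 1 \<omega> \<in> ?T} > 0"
      proof -
        have "emeasure M {\<omega>\<in>space M. B 2 \<omega> - A 1 \<omega> \<in> ?T} > 0"
          by (rule dens_pos[OF pd]) (use d0 d4 e0 ec cd ab in \<open>auto simp: p_def\<close>)
        then show ?thesis by (simp add: emeasure_eq_measure)
      qed
      show ?thesis unfolding E2eq prodeq using pj p0 by simp
    qed
    have E1v: "E1 \<in> sets (vimage_algebra (space M) W1 borel)"
    proof -
      have "E1 = W1 -` {\<alpha><..<\<alpha>+d} \<inter> space M" unfolding E1_def by auto
      then show ?thesis using W1_in[of "{\<alpha><..<\<alpha>+d}"] by simp
    qed
    have E2v: "E2 \<in> sets (vimage_algebra (space M) F N)"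
    proof -
      define T where "T = {v::nat \<Rightarrow> real \<times> real. \<forall>j<k. p < snd (v j) - fst (v j) \<and> snd (v j) - fst (v j) < p + e}"
      have cj[measurable]: "(\<lambda>v. snd (v j) - fst (v j)) \<in> borel_measurable N" for j
      proof -
        have c: "(\<lambda>v. v j) \<in> measurable N (borel \<Otimes>\<^sub>M borel)"
          unfolding N_def by (rule measurable_component_singleton) simp
        have "(\<lambda>v. fst (v j)) \<in> borel_measurable N" "(\<lambda>v. snd (v j)) \<in> borel_measurable N"
          using measurable_compose[OF c measurable_fst] measurable_compose[OF c measurable_snd] by auto
        then show ?thesis by (rule borel_measurable_diff[rotated])
      qed
      have "Measurable.pred N (\<lambda>v. \<forall>j<k. p < snd (v j) - fst (v j) \<and> snd (v j) - fst (v j) < p + e)"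
        by measurable
      then have "T \<in> sets N" unfolding T_def pred_def using spN by simp
      moreover have "E2 = F -` T \<inter> space M" unfolding E2_def T_def F_def by auto
      ultimately show ?thesis using F_in by simp
    qed
    have indep12: "prob (E1 \<inter> E2) = prob E1 * prob E2"
      using indep_setD[OF indep_W1 E1v[unfolded F_def N_def]] E2v[unfolded F_def N_def] by simp
    have pE: "prob (E1 \<inter> E2) > 0" using indep12 pE1 pE2 by simp
    have Eev: "E1 \<inter> E2 \<in> events"
    proof -
      have "E1 \<in> events" unfolding E1_def using W1_meas by measurable
      moreover have "E2 \<in> events" unfolding E2_def by measurable
      ultimately show ?thesis by auto
    qed
    have Dne: "D k \<omega> \<noteq> 0" if \<omega>: "\<omega> \<in> E1 \<inter> E2" for \<omega>
    proof -
      let ?y = "\<lambda>n. B (n+2) \<omega> - A (n+1) \<omega>"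
      have w: "\<alpha> < W1 \<omega>" "W1 \<omega> < \<alpha> + d" using \<omega> unfolding E1_def by auto
      have y: "\<forall>j<k. p < ?y j \<and> ?y j < p + e" using \<omega> unfolding E2_def by auto
      have ch: "\<forall>j<k. g (W1 \<omega>) ?y j < ?y j"
      proof (rule g_chain[OF _ y])
        show "0 \<le> e" using e0 by simp
        show "real k * e < W1 \<omega>" using ke w \<alpha> ab d0 by auto
        show "W1 \<omega> + real k * e < p" using ke w \<alpha> d0 unfolding p_def by auto
      qed
      have ne: "W1 \<omega> \<noteq> m" using m\<alpha> w by auto
      have "g (W1 \<omega>) ?y k \<noteq> g m ?y k" by (rule g_strict[OF ch ne])
      then show ?thesis using ne unfolding D_def by (simp add: wait_g)
    qed
    have kk: "cov M W1 (wait W1 A B k) = integral\<^sup>L M (D k)" "integrable M (D k)" using key[OF ce] by auto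
    show "(even k \<longrightarrow> cov M W1 (wait W1 A B k) > 0) \<and> (odd k \<longrightarrow> cov M W1 (wait W1 A B k) < 0)"
    proof (intro conjI impI)
      assume ev: "even k"
      show "cov M W1 (wait W1 A B k) > 0" unfolding kk(1)
      proof (rule integral_pos_event[OF kk(2) _ Eev pE])
        show "0 \<le> D k x" for x using Dsign ev by auto
        show "0 < D k x" if "x \<in> E1 \<inter> E2" for x using Dsign[of k x] ev Dne[OF that] by auto
      qed
    next
      assume od: "odd k"
      have "integral\<^sup>L M (\<lambda>\<omega>. - D k \<omega>) > 0"
      proof (rule integral_pos_event[OF _ _ Eev pE])
        show "integrable M (\<lambda>\<omega>. - D k \<omega>)" using kk(2) by simp
        show "0 \<le> - D k x" for x using Dsign od by auto
        show "0 < - D k x" if "x \<in> E1 \<inter> E2" for x using Dsign[of k x] od Dne[OF that] by auto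
      qed
      then show "cov M W1 (wait W1 A B k) < 0" unfolding kk(1) by simp
    qed
  qed
qed

end
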